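(* Let $(G,I,O)$ be a geometry with $|I|=|O|$. If $(G,I,O)$ has a causal path cover $\mathcal C$, then $\mathcal C$ is the unique maximum-size collection of pairwise vertex-disjoint directed paths in $G$ from $I$ to $O$ (i.e. any collection of pairwise vertex-disjoint directed paths, each starting in $I$ and ending in $O$, of maximum cardinality, equals $\mathcal C$).
   Context: Graphs are finite, simple, undirected, without self-loops; $v\sim w$ denotes adjacency. A geometry is $(G,I,O)$ with $I,O\subseteq V(G)$. A directed path in $G$ is a sequence of distinct vertices $u_0,\ldots,u_\ell$ ($\ell\ge0$, $\ell=0$ allowed) with consecutive vertices adjacent, oriented by arcs $u_i\to u_{i+1}$; an $I$–$O$ path starts in $I$ and ends in $O$. A path cover of $(G,I,O)$ is a collection of directed paths in $G$ such that every vertex lies on exactly one path, each path meets $I$ at most at its initial vertex, and each path meets $O$ exactly at its final vertex. For a family $\mathcal P$ of vertex-disjoint directed paths, an edge is covered by $\mathcal P$ if it underlies an arc of a path of $\mathcal P$. An influencing walk for $\mathcal P$ is a walk that is a concatenation of zero or more segments of the types (i) $v\to w$, an arc of a path of $\mathcal P$; (ii) $v\to z\to w$ with $v\to z$ an arc of a path of $\mathcal P$ and $zw\in E(G)$ not covered by $\mathcal P$. A vicious circuit for $\mathcal P$ is a closed influencing walk with at least one segment. A causal path cover is a path cover having no vicious circuits. *)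

theory Defs
  imports Main
begin

definition simple_graph :: "'a set \<Rightarrow> ('a \<Rightarrow> 'a \<Rightarrow> bool) \<Rightarrow> bool" where
  "simple_graph V E \<longleftrightarrow> finite V \<and> (\<forall>v w. E v w \<longrightarrow> v \<in> V \<and> w \<in> V)
     \<and> (\<forall>v w. E v w \<longrightarrow> E w v) \<and> (\<forall>v. \<not> E v v)"

definition dpath :: "'a set \<Rightarrow> ('a \<Rightarrow> 'a \<Rightarrow> bool) \<Rightarrow> 'a list \<Rightarrow> bool" where
  "dpath V E p \<longleftrightarrow> p \<noteq> [] \<and> distinct p \<and> set p \<subseteq> V \<and> successively E p"

definition IO_path :: "'a set \<Rightarrow> ('a \<Rightarrow> 'a \<Rightarrow> bool) \<Rightarrow> 'a set \<Rightarrow> 'a set \<Rightarrow> 'a list \<Rightarrow> bool" where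
  "IO_path V E In Out p \<longleftrightarrow> dpath V E p \<and> hd p \<in> In \<and> last p \<in> Out"

definition vertex_disjoint :: "'a list set \<Rightarrow> bool" where
  "vertex_disjoint P \<longleftrightarrow> (\<forall>p\<in>P. \<forall>q\<in>P. p \<noteq> q \<longrightarrow> set p \<inter> set q = {})"

definition path_cover :: "'a set \<Rightarrow> ('a \<Rightarrow> 'a \<Rightarrow> bool) \<Rightarrow> 'a set \<Rightarrow> 'a set \<Rightarrow> 'a list set \<Rightarrow> bool" where
  "path_cover V E In Out C \<longleftrightarrow>
     (\<forall>p\<in>C. dpath V E p)
   \<and> (\<forall>v\<in>V. \<exists>!p. p \<in> C \<and> v \<in> set p)
   \<and> (\<forall>p\<in>C. \<forall>i<length p. p ! i \<in> In \<longrightarrow> i = 0)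
   \<and> (\<forall>p\<in>C. set p \<inter> Out = {last p})"

definition arc :: "'a list set \<Rightarrow> 'a \<Rightarrow> 'a \<Rightarrow> bool" where
  "arc P v w \<longleftrightarrow> (\<exists>p\<in>P. \<exists>i. Suc i < length p \<and> p ! i = v \<and> p ! Suc i = w)"

definition covered :: "'a list set \<Rightarrow> 'a \<Rightarrow> 'a \<Rightarrow> bool" where
  "covered P v w \<longleftrightarrow> arc P v w \<or> arc P w v"

text \<open>One segment of an influencing walk, from v to w (types (i) and (ii)).\<close>
definition segment :: "('a \<Rightarrow> 'a \<Rightarrow> bool) \<Rightarrow> 'a list set \<Rightarrow> 'a \<Rightarrow> 'a \<Rightarrow> bool" where
  "segment E P v w \<longleftrightarrow> arc P v w \<or> (\<exists>z. arc P v z \<and> E z w \<and> \<not> covered P z w)"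

definition has_vicious_circuit :: "('a \<Rightarrow> 'a \<Rightarrow> bool) \<Rightarrow> 'a list set \<Rightarrow> bool" where
  "has_vicious_circuit E P \<longleftrightarrow> (\<exists>v. (v, v) \<in> {(x, y). segment E P x y}\<^sup>+)"

definition causal_path_cover :: "'a set \<Rightarrow> ('a \<Rightarrow> 'a \<Rightarrow> bool) \<Rightarrow> 'a set \<Rightarrow> 'a set \<Rightarrow> 'a list set \<Rightarrow> bool" where
  "causal_path_cover V E In Out C \<longleftrightarrow> path_cover V E In Out C \<and> \<not> has_vicious_circuit E C"

definition disjoint_IO_paths :: "'a set \<Rightarrow> ('a \<Rightarrow> 'a \<Rightarrow> bool) \<Rightarrow> 'a set \<Rightarrow> 'a set \<Rightarrow> 'a list set \<Rightarrow> bool" where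
  "disjoint_IO_paths V E In Out P \<longleftrightarrow> (\<forall>p\<in>P. IO_path V E In Out p) \<and> vertex_disjoint P"

end

theory Submission
  imports Defs
begin

theorem mainTheorem11:
  fixes V :: "'a set" and E :: "'a \<Rightarrow> 'a \<Rightarrow> bool" and In Out :: "'a set" and C :: "'a list set"
  assumes "simple_graph V E" and "In \<subseteq> V" and "Out \<subseteq> V" and "card In = card Out"
    and "causal_path_cover V E In Out C"
  shows "disjoint_IO_paths V E In Out C
         \<and> (\<forall>P. disjoint_IO_paths V E In Out P
                 \<and> (\<forall>Q. disjoint_IO_paths V E In Out Q \<longrightarrow> card Q \<le> card P)
                 \<longrightarrow> P = C)"
proof -
  from assms(1) have finV: "finite V" and Esym: "\<And>v w. E v w \<Longrightarrow> E w v"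
    and EV: "\<And>v w. E v w \<Longrightarrow> v \<in> V \<and> w \<in> V" unfolding simple_graph_def by auto
  from assms(5) have pc: "path_cover V E In Out C" and nvc: "\<not> has_vicious_circuit E C"
    unfolding causal_path_cover_def by auto
  from pc have Cd: "\<And>p. p \<in> C \<Longrightarrow> dpath V E p"
    and Cu: "\<And>v. v \<in> V \<Longrightarrow> \<exists>!p. p \<in> C \<and> v \<in> set p"
    and CIn: "\<And>p i. p \<in> C \<Longrightarrow> i < length p \<Longrightarrow> p!i \<in> In \<Longrightarrow> i = 0"
    and COut: "\<And>p. p \<in> C \<Longrightarrow> set p \<inter> Out = {last p}"
    unfolding path_cover_def by auto
  have Cne: "p \<noteq> []" "distinct p" "set p \<subseteq> V" if "p \<in> C" for p
    using Cd[OF that] unfolding dpath_def by auto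
  have Cuniq: "p = q" if "p \<in> C" "q \<in> C" "v \<in> set p" "v \<in> set q" for p q v
    using Cu[of v] Cne[OF that(1)] that by blast
  have finD: "finite {xs. set xs \<subseteq> V \<and> distinct xs}" using finite_subset_distinct[OF finV] .
  have finC: "finite C" by (rule finite_subset[OF _ finD]) (use Cne in blast)
  have finIn: "finite In" using assms(2) finV finite_subset by blast
  have lastC: "last p \<in> Out" if "p \<in> C" for p using COut[OF that] by blast
  have "bij_betw last C Out"
  proof (rule bij_betwI')
    fix p q assume "p \<in> C" "q \<in> C"
    then show "(last p = last q) = (p = q)"
      using Cuniq[of p q "last p"] Cne last_in_set by metis
  next
    fix p assume "p \<in> C" then show "last p \<in> Out" by (rule lastC)
  next
    fix ov assume o: "ov \<in> Out"
    then have "ov \<in> V" using assms(3) by blast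
    then obtain p where "p \<in> C" "ov \<in> set p" using Cu by blast
    then show "\<exists>p\<in>C. ov = last p" using COut[of p] o by blast
  qed
  then have cardC: "card C = card In" using assms(4) bij_betw_same_card by metis
  define pathof where "pathof i = (THE p. p \<in> C \<and> i \<in> set p)" for i
  have pathof: "pathof i \<in> C \<and> i \<in> set (pathof i)" if "i \<in> V" for i
    unfolding pathof_def using theI'[OF Cu[OF that]] .
  have idx0: "i = hd p" if h: "p \<in> C" "i \<in> set p" "i \<in> In" for p i
  proof -
    obtain a where "a < length p" "p!a = i" using h(2) by (metis in_set_conv_nth)
    with CIn[OF h(1)] h(3) have "a = 0" by blast
    then show ?thesis using \<open>p!a = i\<close> Cne[OF h(1)] by (simp add: hd_conv_nth)
  qed
  have injp: "inj_on pathof In"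
  proof (rule inj_onI)
    fix i j assume "i \<in> In" "j \<in> In" "pathof i = pathof j"
    then show "i = j" using idx0 pathof assms(2) by (metis subsetD)
  qed
  have "pathof ` In \<subseteq> C" using pathof assms(2) by blast
  moreover have "card (pathof ` In) = card C" using card_image[OF injp] cardC by simp
  ultimately have imC: "pathof ` In = C" using card_subset_eq finC by blast
  have hdC: "hd p \<in> In" if h: "p \<in> C" for p
  proof -
    obtain i where "i \<in> In" "p = pathof i" using imC h by blast
    then show ?thesis using idx0 pathof assms(2) by (metis subsetD)
  qed
  have CIO: "disjoint_IO_paths V E In Out C"
    unfolding disjoint_IO_paths_def IO_path_def vertex_disjoint_def
    using Cd hdC lastC Cuniq by blast
  have Carc: "\<exists>p\<in>C. \<exists>i. Suc i < length p \<and> p!i = a \<and> p!Suc i = b" if "arc C a b" for a b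
    using that unfolding arc_def .
  have C1: "b = b'" if h: "arc C a b" "arc C a b'" for a b b'
  proof -
    obtain p i where p: "p \<in> C" "Suc i < length p" "p!i = a" "p!Suc i = b" using Carc[OF h(1)] by blast
    obtain q j where q: "q \<in> C" "Suc j < length q" "q!j = a" "q!Suc j = b'" using Carc[OF h(2)] by blast
    have "p = q" using Cuniq[OF p(1) q(1), of a] p q by (metis Suc_lessD nth_mem)
    then have "i = j" using p q Cne(2)[OF p(1)] by (metis Suc_lessD nth_eq_iff_index_eq)
    then show ?thesis using p q \<open>p = q\<close> by simp
  qed
  have C2: "a = a'" if h: "arc C a b" "arc C a' b" for a a' b
  proof -
    obtain p i where p: "p \<in> C" "Suc i < length p" "p!i = a" "p!Suc i = b" using Carc[OF h(1)] by blast
    obtain q j where q: "q \<in> C" "Suc j < length q" "q!j = a'" "q!Suc j = b" using Carc[OF h(2)] by blast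
    have "p = q" using Cuniq[OF p(1) q(1), of b] p q by (metis nth_mem)
    then have "i = j" using p q Cne(2)[OF p(1)] by (metis nth_eq_iff_index_eq Suc_inject)
    then show ?thesis using p q \<open>p = q\<close> by simp
  qed
  have C3: "\<exists>y. arc C y x" if h: "x \<in> V" "x \<notin> In" for x
  proof -
    obtain p where p: "p \<in> C" "x \<in> set p" using Cu[OF h(1)] by blast
    obtain a where a: "a < length p" "p!a = x" using p(2) by (metis in_set_conv_nth)
    have "a \<noteq> 0" using a hdC[OF p(1)] h(2) Cne(1)[OF p(1)] by (metis hd_conv_nth)
    then obtain b where "a = Suc b" by (cases a) auto
    then show ?thesis unfolding arc_def using p a by blast
  qed
  have Cout: "v \<notin> Out" if h: "arc C v w" for v w
  proof
    assume vo: "v \<in> Out"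
    obtain p i where p: "p \<in> C" "Suc i < length p" "p!i = v" "p!Suc i = w" using Carc[OF h] by blast
    have "v = last p" using COut[OF p(1)] vo p by (metis IntI Suc_lessD nth_mem singletonD)
    also have "last p = p!(length p - 1)" using Cne(1)[OF p(1)] by (simp add: last_conv_nth)
    finally have "i = length p - 1" using p Cne(2)[OF p(1)] by (simp add: nth_eq_iff_index_eq)
    then show False using p by simp
  qed
  have Cidx: "arc C (p!i) (p!Suc i)" if "p \<in> C" "Suc i < length p" for p i
    unfolding arc_def using that by blast
  define S where "S = {(x, y). segment E C x y}"
  have C5: "(y, x) \<in> S" if "arc C y x" for y x
    unfolding S_def segment_def using that by simp
  have C4: "(y, w) \<in> S\<^sup>+" if "arc C y x" "E x w" "w \<noteq> y" for y x w
  proof (cases "covered C x w")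
    case False
    then have "(y, w) \<in> S" unfolding S_def segment_def using that by blast
    then show ?thesis by blast
  next
    case True
    then show ?thesis
    proof (unfold covered_def, elim disjE)
      assume "arc C x w"
      then show ?thesis using C5 that(1) by (meson trancl.simps r_into_trancl')
    next
      assume "arc C w x"
      then show ?thesis using C2 that by blast
    qed
  qed
  have Cstar: "(p!k, p!j) \<in> S\<^sup>*" if "p \<in> C" "k \<le> j" "j < length p" for p k j
    using that(2,3)
  proof (induction j)
    case 0 then show ?case by simp
  next
    case (Suc j)
    show ?case
    proof (cases "k = Suc j")
      case True then show ?thesis by simp
    next
      case False
      then have "(p!k, p!j) \<in> S\<^sup>*" using Suc by simp
      moreover have "(p!j, p!Suc j) \<in> S" using C5 Cidx[OF that(1) Suc.prems(2)] by blast
      ultimately show ?thesis by (meson rtrancl.simps)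
    qed
  qed
  have finS: "finite S"
  proof (rule finite_subset[of _ "V \<times> V"])
    show "S \<subseteq> V \<times> V"
    proof
      fix z assume "z \<in> S"
      then obtain a b where z: "z = (a, b)" "segment E C a b" unfolding S_def by blast
      have av: "a \<in> V \<and> c \<in> V" if "arc C a c" for a c
        using Carc[OF that] Cne(3) by (metis Suc_lessD nth_mem subsetD)
      from z(2) show "z \<in> V \<times> V" unfolding segment_def using av EV z(1) by blast
    qed
  qed (use finV in simp)
  have acy: "acyclic S" using nvc unfolding acyclic_def has_vicious_circuit_def S_def by blast
  have wfS: "wf (S\<^sup>+)" using wf_trancl[OF finite_acyclic_wf[OF finS acy]] .
  show ?thesis
  proof (intro conjI allI impI)
    show "disjoint_IO_paths V E In Out C" by (rule CIO)
  next
    fix P assume asm: "disjoint_IO_paths V E In Out P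
                 \<and> (\<forall>Q. disjoint_IO_paths V E In Out Q \<longrightarrow> card Q \<le> card P)"
    then have Pio: "\<And>q. q \<in> P \<Longrightarrow> IO_path V E In Out q" and Pd: "vertex_disjoint P"
      and Pmax: "card C \<le> card P" using CIO unfolding disjoint_IO_paths_def by auto
    have Pne: "q \<noteq> []" "distinct q" "set q \<subseteq> V" "successively E q" "hd q \<in> In" "last q \<in> Out"
      if "q \<in> P" for q
      using Pio[OF that] unfolding IO_path_def dpath_def by auto
    have Puniq: "p = q" if "p \<in> P" "q \<in> P" "v \<in> set p" "v \<in> set q" for p q v
      using Pd that unfolding vertex_disjoint_def by blast
    have finP: "finite P" by (rule finite_subset[OF _ finD]) (use Pne in blast)
    have injhd: "inj_on hd P"
      by (rule inj_onI) (metis Pne(1) Puniq hd_in_set)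
    have hdP: "hd ` P \<subseteq> In" using Pne by blast
    have "card (hd ` P) = card In"
      using card_image[OF injhd] card_mono[OF finIn hdP] Pmax cardC by simp
    then have hdPIn: "hd ` P = In" using card_subset_eq[OF finIn hdP] by blast
    define W where "W = \<Union>(set ` P)"
    have InW: "In \<subseteq> W" unfolding W_def using hdPIn Pne(1) hd_in_set by fastforce
    have Parc: "\<exists>q\<in>P. \<exists>i. Suc i < length q \<and> q!i = a \<and> q!Suc i = b" if "arc P a b" for a b
      using that unfolding arc_def .
    have P1: "a = a'" if h: "arc P a b" "arc P a' b" for a a' b
    proof -
      obtain p i where p: "p \<in> P" "Suc i < length p" "p!i = a" "p!Suc i = b" using Parc[OF h(1)] by blast
      obtain q j where q: "q \<in> P" "Suc j < length q" "q!j = a'" "q!Suc j = b" using Parc[OF h(2)] by blast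
      have "p = q" using Puniq[OF p(1) q(1), of b] p q by (metis nth_mem)
      then have "i = j" using p q Pne(2)[OF p(1)] by (metis nth_eq_iff_index_eq Suc_inject)
      then show ?thesis using p q \<open>p = q\<close> by simp
    qed
    have P2: "\<exists>x. arc P v x" if h: "v \<in> W" "v \<notin> Out" for v
    proof -
      obtain q where q: "q \<in> P" "v \<in> set q" using h(1) unfolding W_def by blast
      obtain a where a: "a < length q" "q!a = v" using q(2) by (metis in_set_conv_nth)
      have "a \<noteq> length q - 1" using a h(2) Pne(6)[OF q(1)] Pne(1)[OF q(1)] by (metis last_conv_nth)
      then have "Suc a < length q" using a by linarith
      then show ?thesis unfolding arc_def using q a by blast
    qed
    have P3: "E u x \<and> u \<in> W \<and> x \<in> W" if h: "arc P u x" for u x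
    proof -
      obtain q i where q: "q \<in> P" "Suc i < length q" "q!i = u" "q!Suc i = x" using Parc[OF h] by blast
      have "E u x" using successively_nth[OF Pne(4)[OF q(1)] q(2)] q by simp
      moreover have "u \<in> W" "x \<in> W" unfolding W_def using q by (metis UN_I Suc_lessD nth_mem)+
      ultimately show ?thesis by blast
    qed
    have P4: "x \<notin> In" if h: "arc P u x" for u x
    proof
      assume "x \<in> In"
      then obtain q' where q': "q' \<in> P" "x = hd q'" using hdPIn by blast
      obtain q i where q: "q \<in> P" "Suc i < length q" "q!i = u" "q!Suc i = x" using Parc[OF h] by blast
      have "q = q'" using Puniq[OF q(1) q'(1), of x] q q' Pne(1) by (metis hd_in_set nth_mem)
      then have "q!Suc i = q!0" using q q' Pne(1) by (simp add: hd_conv_nth)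
      moreover have "0 < length q" using q(2) by (cases q) auto
      ultimately show False using q(2) Pne(2)[OF q(1)] nth_eq_iff_index_eq[of q "Suc i" 0] by simp
    qed
    have WV: "W \<subseteq> V" unfolding W_def using Pne(3) by blast
    have key: "\<forall>x. arc P u x \<longrightarrow> arc C u x" for u
      using wfS
    proof (induction u rule: wf_induct_rule)
      case (less u)
      show ?case
      proof (intro allI impI, rule ccontr)
        fix x assume ux: "arc P u x" and nux: "\<not> arc C u x"
        have xV: "x \<in> V" using P3[OF ux] WV by blast
        obtain y where y: "arc C y x" using C3[OF xV P4[OF ux]] by blast
        have yu: "y \<noteq> u" using y nux by blast
        have "E x u" using P3[OF ux] Esym by blast
        then have yuS: "(y, u) \<in> S\<^sup>+" using C4[OF y] yu by blast
        obtain p j where p: "p \<in> C" "Suc j < length p" "p!j = y" "p!Suc j = x" using Carc[OF y] by blast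
        have good: "arc C z x'" if "(z, u) \<in> S\<^sup>+" "arc P z x'" for z x'
          using less that by blast
        have before: "(p!k, u) \<in> S\<^sup>+" if "k \<le> j" for k
          using Cstar[OF p(1) that] p yuS by (metis Suc_lessD rtrancl_trancl_trancl)
        have inW: "p!k \<in> W" if "k \<le> j" for k
          using that
        proof (induction k)
          case 0
          have "p!0 \<in> In" using hdC[OF p(1)] Cne(1)[OF p(1)] by (simp add: hd_conv_nth)
          then show ?case using InW by blast
        next
          case (Suc k)
          then have kW: "p!k \<in> W" by simp
          have ar: "arc C (p!k) (p!Suc k)" using Cidx[OF p(1)] Suc.prems p(2) by simp
          have "p!k \<notin> Out" using Cout[OF ar] .
          then obtain x' where x': "arc P (p!k) x'" using P2 kW by blast
          have "arc C (p!k) x'" using good[OF before x'] Suc.prems by simp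
          then have "x' = p!Suc k" using C1 ar by blast
          then show ?case using P3[OF x'] by blast
        qed
        have "y \<in> W" using inW[of j] p by simp
        moreover have "y \<notin> Out" using Cout[OF y] .
        ultimately obtain x'' where x'': "arc P y x''" using P2 by blast
        have "arc C y x''" using good[OF yuS x''] .
        then have "x'' = x" using C1 y by blast
        then have "y = u" using P1 x'' ux by blast
        then show False using yu by blast
      qed
    qed
    have PC: "q \<in> C" if q: "q \<in> P" for q
    proof -
      have hq: "hd q \<in> V" using Pne(5)[OF q] assms(2) by blast
      obtain p where p: "p \<in> C" "hd q \<in> set p" using Cu[OF hq] by blast
      have hp: "hd p = hd q" using idx0[OF p] Pne(5)[OF q] by simp
      have eq: "q!k = p!k" if "k < length q" "k < length p" for k
        using that
      proof (induction k)
        case 0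
        then show ?case using hp Pne(1)[OF q] Cne(1)[OF p(1)] by (simp add: hd_conv_nth)
      next
        case (Suc k)
        then have "q!k = p!k" by simp
        have "arc P (q!k) (q!Suc k)" unfolding arc_def using q Suc.prems by blast
        then have "arc C (q!k) (q!Suc k)" using key by blast
        moreover have "arc C (p!k) (p!Suc k)" using Cidx[OF p(1)] Suc.prems by simp
        ultimately show ?case using C1 \<open>q!k = p!k\<close> by simp
      qed
      have lq: "length q > 0" "length p > 0" using Pne(1)[OF q] Cne(1)[OF p(1)] by auto
      have "length q = length p"
      proof (rule ccontr)
        assume "length q \<noteq> length p"
        then consider "length q < length p" | "length p < length q" by linarith
        then show False
        proof cases
          case 1
          let ?k = "length q - 1"
          have "p!?k = last q" using eq[of ?k] 1 lq by (simp add: last_conv_nth)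
          then have "p!?k \<in> Out" using Pne(6)[OF q] by simp
          then have "p!?k = last p" using COut[OF p(1)] 1 by (metis IntI diff_less less_trans lq(1) nth_mem singletonD zero_less_one)
          then have "?k = length p - 1" using Cne(2)[OF p(1)] 1 lq by (simp add: last_conv_nth nth_eq_iff_index_eq)
          then show False using 1 lq by (cases q; cases p) auto
        next
          case 2
          let ?k = "length p - 1"
          have e: "q!?k = last p" using eq[of ?k] 2 lq by (simp add: last_conv_nth)
          have "arc P (q!?k) (q!Suc ?k)" unfolding arc_def using q 2 lq by (intro bexI[of _ q] exI[of _ ?k]) auto
          then have "arc C (q!?k) (q!Suc ?k)" using key by blast
          then have "last p \<notin> Out" using Cout e by metis
          then show False using lastC[OF p(1)] by blast
        qed
      qed
      then have "q = p" using eq by (simp add: nth_equalityI)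
      then show ?thesis using p by simp
    qed
    then have "P \<subseteq> C" by blast
    then show "P = C" using card_subset_eq[OF finC] Pmax card_mono[OF finC] by (meson antisym)
  qed
qed

end
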